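(* Let $n\ge 0$, let $T$ be a triangulation of a regular polygon with $n+3$ vertices and let $\alpha,\alpha'$ be positive roots. Then $\operatorname{Supp}\alpha\cap\operatorname{Supp}\alpha'$ is connected as a subset of the (underlying graph of the) quiver ${Q}_T$.
   Context: Diagonals of the polygon are called roots; those in $T$ are negative roots, indexed by a set $I$ (the one indexed by $i$ written $-\alpha_i$), and the others positive roots. $\operatorname{Supp}\alpha$ is the set of $i\in I$ with $-\alpha_i$ crossing $\alpha$. The quiver ${Q}_T$ has vertex set $I$, with an arrow between $i$ and $j$ exactly when $-\alpha_i$ and $-\alpha_j$ bound a common triangle of $T$. *)

theory Defs
  imports Main
begin

text \<open>Combinatorial model of a convex (regular) polygon with N vertices labelled
  0, 1, ..., N-1 in cyclic order. Segments are 2-element sets of vertices.\<close>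

definition is_diagonal :: "nat \<Rightarrow> nat set \<Rightarrow> bool" where
  "is_diagonal N d \<longleftrightarrow> (\<exists>a b. d = {a, b} \<and> a < b \<and> b < N \<and> a + 2 \<le> b \<and> \<not> (a = 0 \<and> b = N - 1))"

definition is_edge :: "nat \<Rightarrow> nat set \<Rightarrow> bool" where
  "is_edge N e \<longleftrightarrow> (\<exists>a b. e = {a, b} \<and> a < b \<and> b < N \<and> (b = a + 1 \<or> (a = 0 \<and> b = N - 1)))"

definition crosses :: "nat set \<Rightarrow> nat set \<Rightarrow> bool" where
  "crosses d e \<longleftrightarrow> (\<exists>a b c c'. d = {a, b} \<and> e = {c, c'} \<and> a < c \<and> c < b \<and> (c' < a \<or> b < c'))"

definition is_triangulation :: "nat \<Rightarrow> nat set set \<Rightarrow> bool" where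
  "is_triangulation N T \<longleftrightarrow>
     (\<forall>d\<in>T. is_diagonal N d) \<and>
     (\<forall>d\<in>T. \<forall>e\<in>T. \<not> crosses d e) \<and>
     (\<forall>e. is_diagonal N e \<and> (\<forall>d\<in>T. \<not> crosses d e) \<longrightarrow> e \<in> T)"

text \<open>Roots are diagonals; negative roots are those in T, positive roots the others.
  We index the negative roots by the diagonals of T themselves (I = T).\<close>
definition positive_root :: "nat \<Rightarrow> nat set set \<Rightarrow> nat set \<Rightarrow> bool" where
  "positive_root N T \<alpha> \<longleftrightarrow> is_diagonal N \<alpha> \<and> \<alpha> \<notin> T"

definition Supp :: "nat set set \<Rightarrow> nat set \<Rightarrow> nat set set" where
  "Supp T \<alpha> = {i \<in> T. crosses i \<alpha>}"

definition is_triangle_of :: "nat \<Rightarrow> nat set set \<Rightarrow> nat \<Rightarrow> nat \<Rightarrow> nat \<Rightarrow> bool" where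
  "is_triangle_of N T x y z \<longleftrightarrow> x < N \<and> y < N \<and> z < N \<and> x \<noteq> y \<and> y \<noteq> z \<and> x \<noteq> z \<and>
     (\<forall>s\<in>{{x, y}, {y, z}, {x, z}}. is_edge N s \<or> s \<in> T)"

text \<open>Underlying graph of the quiver Q_T: vertices I = T, an edge between i and j
  iff they are distinct and bound a common triangle of T.\<close>
definition quiver_adj :: "nat \<Rightarrow> nat set set \<Rightarrow> nat set \<Rightarrow> nat set \<Rightarrow> bool" where
  "quiver_adj N T i j \<longleftrightarrow> i \<in> T \<and> j \<in> T \<and> i \<noteq> j \<and>
     (\<exists>x y z. is_triangle_of N T x y z \<and> i \<in> {{x, y}, {y, z}, {x, z}} \<and> j \<in> {{x, y}, {y, z}, {x, z}})"

text \<open>A set S of vertices is connected in the graph: any two elements are joined by a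
  path staying in S (the empty set counts as connected).\<close>
definition connected_in :: "('v \<Rightarrow> 'v \<Rightarrow> bool) \<Rightarrow> 'v set \<Rightarrow> bool" where
  "connected_in adj S \<longleftrightarrow> (\<forall>x\<in>S. \<forall>y\<in>S. (\<lambda>u v. u \<in> S \<and> v \<in> S \<and> adj u v)\<^sup>*\<^sup>* x y)"

end

theory Submission
  imports Defs
begin


definition ins :: "nat \<Rightarrow> nat \<Rightarrow> nat \<Rightarrow> bool" where
  "ins a b v \<longleftrightarrow> (a < v \<and> v < b) \<or> (b < v \<and> v < a)"

definition lins :: "nat \<Rightarrow> nat \<Rightarrow> nat \<Rightarrow> bool" where
  "lins a b v \<longleftrightarrow> (a < v \<and> v < b) \<or> (b < v \<and> v < a)"

definition cr :: "nat \<Rightarrow> nat \<Rightarrow> nat \<Rightarrow> nat \<Rightarrow> bool" where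
  "cr a b c d \<longleftrightarrow> c \<noteq> a \<and> c \<noteq> b \<and> d \<noteq> a \<and> d \<noteq> b \<and> (ins a b c \<noteq> ins a b d)"

definition rk :: "nat \<Rightarrow> nat \<Rightarrow> nat \<Rightarrow> nat" where
  "rk N a v = (if a \<le> v then v - a else v + N - a)"

lemma ins_sym: "ins a b v = ins b a v"
  unfolding ins_def by auto

lemma ins_end: "\<not> ins a b a" "\<not> ins a b b"
  unfolding ins_def by auto

lemma cr_swap1: "cr a b c d = cr b a c d"
  unfolding cr_def using ins_sym by auto

lemma cr_swap2: "cr a b c d = cr a b d c"
  unfolding cr_def by auto

lemma beq: "((P::bool) = A) = (Q = A) \<longleftrightarrow> P = Q" by auto

lemma K_a: "a < N \<Longrightarrow> z < N \<Longrightarrow> v < N \<Longrightarrow> z \<noteq> a \<Longrightarrow> v \<noteq> a \<Longrightarrow> v \<noteq> z \<Longrightarrow>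
  ins a z v = ((rk N a v < rk N a z) = (a < z))"
  unfolding ins_def rk_def by (cases "a < z"; cases "a < v"; cases "v < z"; simp)

lemma rk_inj: "a < N \<Longrightarrow> v < N \<Longrightarrow> w < N \<Longrightarrow> v \<noteq> w \<Longrightarrow> rk N a v \<noteq> rk N a w"
  unfolding rk_def by (cases "a \<le> v"; cases "a \<le> w"; simp; arith)

lemma rk_less: "a < N \<Longrightarrow> v < N \<Longrightarrow> w < N \<Longrightarrow>
   (rk N a v < rk N a w) = ((a \<le> v \<and> a \<le> w \<and> v < w) \<or> (v < a \<and> w < a \<and> v < w) \<or> (a \<le> v \<and> w < a))"
  unfolding rk_def by auto

lemma K0: "a < N \<Longrightarrow> y < N \<Longrightarrow> z < N \<Longrightarrow> v < N \<Longrightarrow> y \<noteq> a \<Longrightarrow> z \<noteq> a \<Longrightarrow> y < z \<Longrightarrow> v \<noteq> y \<Longrightarrow> v \<noteq> z \<Longrightarrow> v \<noteq> a \<Longrightarrow>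
  ins y z v = (lins (rk N a y) (rk N a z) (rk N a v) \<noteq> ins y z a)"
  unfolding lins_def by (simp add: rk_less ins_def; cases "a < y"; cases "a < z"; cases "a < v"; cases "v < y"; cases "v < z"; simp)

lemma K: assumes "a < N" "y < N" "z < N" "v < N" "y \<noteq> a" "z \<noteq> a" "y \<noteq> z" "v \<noteq> y" "v \<noteq> z" "v \<noteq> a"
  shows "ins y z v = (lins (rk N a y) (rk N a z) (rk N a v) \<noteq> ins y z a)"
proof (cases "y < z")
  case True
  then show ?thesis using K0[OF assms(1-6) True assms(8-10)] by blast
next
  case False
  then have "z < y" using assms(7) by simp
  then have "ins z y v = (lins (rk N a z) (rk N a y) (rk N a v) \<noteq> ins z y a)"
    using K0[of a N z y v] assms by blast
  then show ?thesis unfolding ins_sym[of y z] lins_def by blast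
qed

lemma ssa: "a<N \<Longrightarrow> z<N \<Longrightarrow> v<N \<Longrightarrow> w<N \<Longrightarrow> z\<noteq>a \<Longrightarrow> v \<noteq> a \<Longrightarrow> v \<noteq> z \<Longrightarrow> w \<noteq> a \<Longrightarrow> w \<noteq> z
  \<Longrightarrow> (ins a z v = ins a z w) = ((rk N a v < rk N a z) = (rk N a w < rk N a z))"
  by (simp add: K_a[of a N z v] K_a[of a N z w] beq)

lemma ssg: "a<N \<Longrightarrow> y<N \<Longrightarrow> z<N \<Longrightarrow> v<N \<Longrightarrow> w<N \<Longrightarrow> y \<noteq> a \<Longrightarrow> z\<noteq>a \<Longrightarrow> y \<noteq> z \<Longrightarrow> v \<noteq> a \<Longrightarrow> v \<noteq> y \<Longrightarrow> v \<noteq> z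
  \<Longrightarrow> w \<noteq> a \<Longrightarrow> w \<noteq> y \<Longrightarrow> w \<noteq> z
  \<Longrightarrow> (ins y z v = ins y z w) = (lins (rk N a y) (rk N a z) (rk N a v) = lins (rk N a y) (rk N a z) (rk N a w))"
  using K[of a N y z v] K[of a N y z w] by auto

lemma sepb: "a<N \<Longrightarrow> y<N \<Longrightarrow> z<N \<Longrightarrow> v<N \<Longrightarrow> y \<noteq> a \<Longrightarrow> z\<noteq>a \<Longrightarrow> y \<noteq> z \<Longrightarrow> v \<noteq> a \<Longrightarrow> v \<noteq> y \<Longrightarrow> v \<noteq> z
  \<Longrightarrow> (ins y z v = ins y z a) = (\<not> lins (rk N a y) (rk N a z) (rk N a v))"
  using K[of a N y z v] by auto

lemma F1: assumes "a < N" "b < N" "x < N" "p < N"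
  "a \<noteq> b" "x \<noteq> a" "x \<noteq> b" "p \<noteq> x" "p \<noteq> b" "ins x b p \<noteq> ins x b a"
  shows "p \<noteq> a \<and> ins a b p = ins a b x \<and> ins a x p = ins a x b"
proof -
  have pa: "p \<noteq> a" using assms(10) by auto
  have h: "lins (rk N a x) (rk N a b) (rk N a p)" using sepb[of a N x b p] assms pa by auto
  have d: "rk N a x \<noteq> rk N a b" "rk N a p \<noteq> rk N a b" "rk N a x \<noteq> rk N a p"
    using rk_inj assms pa by auto
  have "(rk N a p < rk N a b) = (rk N a x < rk N a b)" "(rk N a p < rk N a x) = (rk N a b < rk N a x)"
    using h d unfolding lins_def by auto
  then show ?thesis using ssa[of a N b p x] ssa[of a N x p b] assms pa by auto
qed

lemma F2: assumes "a < N" "b < N" "x < N" "q < N"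
  "a \<noteq> b" "x \<noteq> a" "x \<noteq> b" "ins a b x = ins a b q" "q \<noteq> a" "q \<noteq> b" "q \<noteq> x" "ins x b q = ins x b a"
  shows "ins a x q \<noteq> ins a x b"
proof -
  have h1: "(rk N a x < rk N a b) = (rk N a q < rk N a b)" using ssa[of a N b x q] assms by auto
  have h2: "\<not> lins (rk N a x) (rk N a b) (rk N a q)" using sepb[of a N x b q] assms by auto
  have d: "rk N a x \<noteq> rk N a b" "rk N a q \<noteq> rk N a b" "rk N a x \<noteq> rk N a q"
    using rk_inj assms by auto
  have "(rk N a q < rk N a x) \<noteq> (rk N a b < rk N a x)"
    using h1 h2 d unfolding lins_def by auto
  then show ?thesis using ssa[of a N x q b] assms by auto
qed

lemma F3: assumes "a < N" "b < N" "x < N" "p < N" "v < N"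
  "a \<noteq> b" "x \<noteq> a" "x \<noteq> b" "p \<noteq> a" "p \<noteq> b" "p \<noteq> x" "ins a b p = ins a b x" "ins a x p = ins a x b"
  "v \<noteq> a" "v \<noteq> b" "v \<noteq> p" "ins a b v = ins a b x" "ins a p v = ins a p b"
  shows "v \<noteq> x \<and> ins a x v = ins a x b"
proof -
  have h1: "(rk N a p < rk N a b) = (rk N a x < rk N a b)" using assms(12) ssa[of a N b p x] assms(1-11) by blast
  have h2: "(rk N a p < rk N a x) = (rk N a b < rk N a x)" using assms(13) ssa[of a N x p b] assms(1-11) by blast
  have h3: "(rk N a v < rk N a b) = (rk N a x < rk N a b)" using assms(17) ssa[of a N b v x] assms(1-11,14-16) by blast
  have h4: "(rk N a v < rk N a p) = (rk N a b < rk N a p)" using assms(18) ssa[of a N p v b] assms(1-11,14-16) by blast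
  have d: "rk N a x \<noteq> rk N a b" "rk N a p \<noteq> rk N a b" "rk N a x \<noteq> rk N a p" "rk N a v \<noteq> rk N a b" "rk N a v \<noteq> rk N a p"
    using rk_inj assms by auto
  have vx: "v \<noteq> x" using h1 h2 h4 d by auto
  moreover have "(rk N a v < rk N a x) = (rk N a b < rk N a x)"
    using h1 h2 h3 h4 d by auto
  ultimately show ?thesis using ssa[of a N x v b] assms by blast
qed

lemma F4: assumes "a < N" "b < N" "x < N" "v < N"
  "a \<noteq> b" "x \<noteq> a" "x \<noteq> b" "v \<noteq> a" "v \<noteq> x" "ins a x v \<noteq> ins a x b"
  shows "v \<noteq> b \<and> ins a b v = ins a b x"
proof -
  have vb: "v \<noteq> b" using assms(10) by auto
  have h: "(rk N a v < rk N a x) \<noteq> (rk N a b < rk N a x)" using ssa[of a N x v b] assms vb by auto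
  have d: "rk N a x \<noteq> rk N a b" "rk N a v \<noteq> rk N a b" "rk N a x \<noteq> rk N a v"
    using rk_inj assms vb by auto
  have "(rk N a v < rk N a b) = (rk N a x < rk N a b)" using h d by auto
  then show ?thesis using ssa[of a N b v x] assms vb by auto
qed

lemma S1: assumes "a < N" "b < N" "x < N" "q < N"
  "a \<noteq> b" "x \<noteq> a" "x \<noteq> b" "q \<noteq> a" "q \<noteq> b" "ins a b q \<noteq> ins a b x"
  shows "q \<noteq> x \<and> ins a x q = ins a x b"
proof -
  have qx: "q \<noteq> x" using assms(10) by auto
  have h: "(rk N a q < rk N a b) \<noteq> (rk N a x < rk N a b)" using ssa[of a N b q x] assms qx by auto
  have d: "rk N a x \<noteq> rk N a b" "rk N a q \<noteq> rk N a b" "rk N a x \<noteq> rk N a q"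
    using rk_inj assms qx by auto
  have "(rk N a q < rk N a x) = (rk N a b < rk N a x)" using h d by auto
  then show ?thesis using ssa[of a N x q b] assms qx by auto
qed

lemma S2lin: "(C::nat) \<noteq> D \<Longrightarrow> A \<noteq> X \<Longrightarrow> C = A \<or> C = X \<or> lins A X C \<Longrightarrow> D = A \<or> D = X \<or> lins A X D \<Longrightarrow>
   V = A \<or> V = X \<or> \<not> lins A X V \<Longrightarrow> V \<noteq> C \<Longrightarrow> V \<noteq> D \<Longrightarrow> \<not> lins C D V"
  unfolding lins_def by (cases "A < X"; cases "C < D"; auto)

lemma S2: assumes "a < N" "b < N" "x < N" "c < N" "d < N" "v < N"
  "a \<noteq> b" "x \<noteq> a" "x \<noteq> b" "c \<noteq> d" "c = a \<or> c = x \<or> ins a x c \<noteq> ins a x b"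
  "d = a \<or> d = x \<or> ins a x d \<noteq> ins a x b" "v = a \<or> v = x \<or> ins a x v = ins a x b"
  "v \<noteq> c" "v \<noteq> d" "b \<noteq> c" "b \<noteq> d"
  shows "ins c d v = ins c d b"
proof (cases "v = b")
  case True then show ?thesis by simp
next
  case False
  let ?R = "rk N b"
  have hc: "?R c = ?R a \<or> ?R c = ?R x \<or> lins (?R a) (?R x) (?R c)"
    using assms(11) sepb[of b N a x c] assms by auto
  have hd: "?R d = ?R a \<or> ?R d = ?R x \<or> lins (?R a) (?R x) (?R d)"
    using assms(12) sepb[of b N a x d] assms by auto
  have hv: "?R v = ?R a \<or> ?R v = ?R x \<or> \<not> lins (?R a) (?R x) (?R v)"
    using assms(13) sepb[of b N a x v] assms False by auto
  have dd: "?R c \<noteq> ?R d" "?R a \<noteq> ?R x" "?R v \<noteq> ?R c" "?R v \<noteq> ?R d"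
    using rk_inj assms by auto
  have "\<not> lins (?R c) (?R d) (?R v)" using S2lin[OF dd(1,2) hc hd hv dd(3,4)] .
  then show ?thesis using sepb[of b N c d v] assms False by auto
qed



lemma G1: assumes "a < N" "b < N" "x < N" "c < N" "d < N"
  "a \<noteq> b" "x \<noteq> a" "x \<noteq> b" "c \<noteq> d" "c \<noteq> a" "c \<noteq> b" "ins a b c = ins a b x"
  "\<not> cr a b c d" "\<not> cr a x c d" "\<not> cr x b c d"
  shows "((c = a \<or> c = x \<or> ins a x c \<noteq> ins a x b) \<and> (d = a \<or> d = x \<or> ins a x d \<noteq> ins a x b)) \<or>
         ((c = x \<or> c = b \<or> ins x b c \<noteq> ins x b a) \<and> (d = x \<or> d = b \<or> ins x b d \<noteq> ins x b a))"
proof -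
  let ?R = "rk N a"
  have dXB: "?R x \<noteq> ?R b" using rk_inj assms by auto
  have hC: "(?R c < ?R b) = (?R x < ?R b)" if "c \<noteq> x" using ssa[of a N b c x] assms that by auto
  show ?thesis
  proof (cases "c = x")
    case cx: True
    show ?thesis
    proof (cases "d = a \<or> d = b")
      case True then show ?thesis using cx by auto
    next
      case False
      then have dn: "d \<noteq> a" "d \<noteq> b" "d \<noteq> x" using cx assms(9) by auto
      have "ins a b x = ins a b d" using assms(13) cx dn assms unfolding cr_def by auto
      then have h1: "(?R x < ?R b) = (?R d < ?R b)" using ssa[of a N b x d] assms dn by auto
      have dd: "?R d \<noteq> ?R x" "?R d \<noteq> ?R b" using rk_inj assms dn by auto
      have "(?R d < ?R x) \<noteq> (?R b < ?R x) \<or> lins (?R x) (?R b) (?R d)"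
        using h1 dd dXB unfolding lins_def by auto
      moreover have "(ins a x d = ins a x b) = ((?R d < ?R x) = (?R b < ?R x))"
        using ssa[of a N x d b] assms dn by auto
      moreover have "(ins x b d = ins x b a) = (\<not> lins (?R x) (?R b) (?R d))"
        using sepb[of a N x b d] assms dn by auto
      ultimately show ?thesis using cx by auto
    qed
  next
    case cx: False
    have hc: "(?R c < ?R b) = (?R x < ?R b)" using hC cx by auto
    have dcb: "?R c \<noteq> ?R x" "?R c \<noteq> ?R b" using rk_inj assms cx by auto
    have eA: "(ins a x c = ins a x b) = ((?R c < ?R x) = (?R b < ?R x))"
      using ssa[of a N x c b] assms cx by auto
    have eB: "(ins x b c = ins x b a) = (\<not> lins (?R x) (?R b) (?R c))"
      using sepb[of a N x b c] assms cx by auto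
    have orC: "(?R c < ?R x) \<noteq> (?R b < ?R x) \<or> lins (?R x) (?R b) (?R c)"
      using hc dcb dXB unfolding lins_def by auto
    show ?thesis
    proof (cases "d = a")
      case True
      have "ins x b c = ins x b a" using assms(15) True assms cx unfolding cr_def by auto
      then have "\<not> lins (?R x) (?R b) (?R c)" using eB by auto
      then have "(?R c < ?R x) \<noteq> (?R b < ?R x)" using orC by auto
      then show ?thesis using True eA by auto
    next
      case da: False
      show ?thesis
      proof (cases "d = b")
        case True
        have "ins a x c = ins a x b" using assms(14) True assms cx unfolding cr_def by auto
        then have "lins (?R x) (?R b) (?R c)" using eA orC by auto
        then show ?thesis using True eB by auto
      next
        case db: False
        show ?thesis
        proof (cases "d = x")
          case True then show ?thesis using orC eA eB by auto
        next
          case dx: False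
          have c1: "ins a b c = ins a b d" using assms(13) da db assms unfolding cr_def by auto
          have c2: "ins a x c = ins a x d" using assms(14) da dx assms cx unfolding cr_def by auto
          have c3: "ins x b c = ins x b d" using assms(15) db dx assms cx unfolding cr_def by auto
          have eA': "(ins a x d = ins a x b) = ((?R d < ?R x) = (?R b < ?R x))"
            using ssa[of a N x d b] assms da dx by auto
          have eB': "(ins x b d = ins x b a) = (\<not> lins (?R x) (?R b) (?R d))"
            using sepb[of a N x b d] assms db dx da by auto
          have "(?R c < ?R x) = (?R d < ?R x)" using c2 ssa[of a N x c d] assms cx da dx by auto
          moreover have "lins (?R x) (?R b) (?R c) = lins (?R x) (?R b) (?R d)"
            using c3 ssg[of a N x b c d] assms cx da dx db by auto
          ultimately show ?thesis using orC eA eB eA' eB' by auto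
        qed
      qed
    qed
  qed
qed

lemma G2: assumes "a < N" "b < N" "x < N" "c < N" "d < N" "p < N" "q < N"
  "a \<noteq> b" "x \<noteq> a" "x \<noteq> b" "c \<noteq> d"
  "c = a \<or> c = x \<or> ins a x c \<noteq> ins a x b" "d = a \<or> d = x \<or> ins a x d \<noteq> ins a x b"
  "cr a b p q" "cr c d p q"
  shows "cr a x p q"
proof -
  have bc: "b \<noteq> c" "b \<noteq> d" using assms(8,10,12,13) by auto
  have main: "cr a x p q" if pq: "cr a b p q" "cr c d p q" "ins a b p = ins a b x"
    and pN: "p < N" and qN: "q < N" for p q
  proof -
    have pq': "p \<noteq> a" "p \<noteq> b" "q \<noteq> a" "q \<noteq> b" "ins a b p \<noteq> ins a b q" using pq(1) unfolding cr_def by auto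
    have "ins a b q \<noteq> ins a b x" using pq' pq(3) by auto
    then have hq: "q \<noteq> x" "ins a x q = ins a x b" using S1[of a N b x q] assms pq' qN by auto
    have cd: "p \<noteq> c" "p \<noteq> d" "q \<noteq> c" "q \<noteq> d" "ins c d p \<noteq> ins c d q" using pq(2) unfolding cr_def by auto
    have eq: "ins c d q = ins c d b" using S2[of a N b x c d q] assms hq qN cd bc by auto
    have "\<not> (p = x \<or> ins a x p = ins a x b)"
    proof
      assume "p = x \<or> ins a x p = ins a x b"
      then have "ins c d p = ins c d b" using S2[of a N b x c d p] assms pN cd bc by auto
      then show False using eq cd(5) by auto
    qed
    then show ?thesis unfolding cr_def using pq' hq by auto
  qed
  have "ins a b p \<noteq> ins a b q" using assms(14) unfolding cr_def by auto
  then show ?thesis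
  proof (cases "ins a b p = ins a b x")
    case True then show ?thesis using main[of p q] assms by auto
  next
    case False
    then have "ins a b q = ins a b x" using \<open>ins a b p \<noteq> ins a b q\<close> by auto
    then have "cr a x q p" using main[of q p] assms cr_swap2 by blast
    then show ?thesis using cr_swap2 by blast
  qed
qed



lemma cr_sym: "cr a b c d \<longleftrightarrow> cr c d a b"
  unfolding cr_def ins_def by auto

lemma crosses_cr: "crosses {a,b} {c,d} \<longleftrightarrow> cr a b c d"
proof
  assume "crosses {a,b} {c,d}"
  then obtain a' b' c1 c2 where h: "{a,b} = {a',b'}" "{c,d} = {c1,c2}" "a' < c1" "c1 < b'" "c2 < a' \<or> b' < c2"
    unfolding crosses_def by blast
  from h(1) have "(a = a' \<and> b = b') \<or> (a = b' \<and> b = a')" by (metis doubleton_eq_iff)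
  moreover from h(2) have "(c = c1 \<and> d = c2) \<or> (c = c2 \<and> d = c1)" by (metis doubleton_eq_iff)
  ultimately show "cr a b c d" using h(3-5) unfolding cr_def ins_def by auto
next
  assume H: "cr a b c d"
  have gen: "crosses {lo,hi} {c,d}" if "lo < hi" "cr lo hi c d" for lo hi
  proof (cases "lo < c \<and> c < hi")
    case True
    then have "\<not> (lo < d \<and> d < hi)" "d \<noteq> lo" "d \<noteq> hi" using that unfolding cr_def ins_def by auto
    then have "d < lo \<or> hi < d" by auto
    then show ?thesis unfolding crosses_def using True by blast
  next
    case False
    then have "lo < d \<and> d < hi" "c \<noteq> lo" "c \<noteq> hi" using that unfolding cr_def ins_def by auto
    moreover from this False have "c < lo \<or> hi < c" by auto
    ultimately have "{c,d} = {d,c}" "lo < d" "d < hi" "c < lo \<or> hi < c" by (auto simp: insert_commute)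
    then show ?thesis unfolding crosses_def by blast
  qed
  have "a \<noteq> b" using H unfolding cr_def ins_def by auto
  then show "crosses {a,b} {c,d}"
  proof (cases "a < b")
    case True then show ?thesis using gen H by blast
  next
    case False
    then have "b < a" using \<open>a \<noteq> b\<close> by simp
    moreover have "cr b a c d" using H cr_swap1 by blast
    ultimately show ?thesis using gen[of b a] by (simp add: insert_commute)
  qed
qed

definition insd :: "nat set \<Rightarrow> nat \<Rightarrow> bool" where
  "insd i v \<longleftrightarrow> (\<exists>a b. i = {a,b} \<and> a < v \<and> v < b)"

lemma insd_pair: "insd {a,b} v = ins a b v"
proof
  assume "insd {a,b} v"
  then obtain a' b' where h: "{a,b} = {a',b'}" "a' < v" "v < b'" unfolding insd_def by blast
  from h(1) have "(a = a' \<and> b = b') \<or> (a = b' \<and> b = a')" by (metis doubleton_eq_iff)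
  then show "ins a b v" using h unfolding ins_def by auto
next
  assume "ins a b v"
  then show "insd {a,b} v" unfolding ins_def insd_def by (metis insert_commute)
qed

definition far :: "nat \<Rightarrow> nat set \<Rightarrow> nat set \<Rightarrow> nat set" where
  "far N i j = {v. v < N \<and> v \<notin> i \<and> (\<exists>w\<in>j. w \<notin> i \<and> insd i v = insd i w)}"

lemma far_eq:
  assumes "j = {c,d}" "w \<in> j" "w \<notin> {a,b}" "\<not> cr a b c d"
  shows "far N {a,b} j = {v. v < N \<and> v \<notin> {a,b} \<and> ins a b v = ins a b w}"
  using assms unfolding far_def insd_pair cr_def by auto

lemma edge_nocross:
  assumes "is_edge N {u,v}" "p < N" "q < N"
  shows "\<not> cr u v p q"
proof -
  obtain a b where h: "{u,v} = {a,b}" "a < b" "b < N" "b = a + 1 \<or> (a = 0 \<and> b = N - 1)"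
    using assms(1) unfolding is_edge_def by blast
  from h(1) have "(u = a \<and> v = b) \<or> (u = b \<and> v = a)" by (metis doubleton_eq_iff)
  then have "cr u v p q = cr a b p q" using cr_swap1 by blast
  moreover have "\<not> cr a b p q" using h(2-4) assms(2,3) unfolding cr_def ins_def by auto
  ultimately show ?thesis by simp
qed

lemma nonedge_diag:
  assumes "u \<noteq> v" "u < N" "v < N" "\<not> is_edge N {u,v}"
  shows "is_diagonal N {u,v}"
proof (cases "u < v")
  case True
  have "v \<noteq> u + 1" "\<not> (u = 0 \<and> v = N - 1)" using assms True unfolding is_edge_def by blast+
  then show ?thesis unfolding is_diagonal_def using True assms by (intro exI[of _ u] exI[of _ v]) auto
next
  case False
  then have F: "v < u" using assms(1) by simp
  have "u \<noteq> v + 1" "\<not> (v = 0 \<and> u = N - 1)" using assms F unfolding is_edge_def by (metis insert_commute)+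
  then show ?thesis unfolding is_diagonal_def using F assms by (intro exI[of _ v] exI[of _ u]) (auto simp: insert_commute)
qed

lemma diag_obtain:
  assumes "is_diagonal N d"
  obtains a b where "d = {a,b}" "a < b" "b < N" "a + 2 \<le> b" "\<not> (a = 0 \<and> b = N - 1)"
  using assms unfolding is_diagonal_def by blast

lemma tri_diag: "is_triangulation N T \<Longrightarrow> d \<in> T \<Longrightarrow> is_diagonal N d"
  unfolding is_triangulation_def by blast
lemma tri_nc: "is_triangulation N T \<Longrightarrow> d \<in> T \<Longrightarrow> e \<in> T \<Longrightarrow> \<not> crosses d e"
  unfolding is_triangulation_def by blast
lemma tri_max: "is_triangulation N T \<Longrightarrow> is_diagonal N e \<Longrightarrow> e \<notin> T \<Longrightarrow> \<exists>d\<in>T. crosses d e"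
  unfolding is_triangulation_def by blast

lemma tri_exists_ord:
  assumes tri: "is_triangulation N T" and ab: "{a,b} \<in> T" and lt: "a < b"
    and w: "w < N" "w \<noteq> a" "w \<noteq> b"
  shows "\<exists>x. x < N \<and> x \<noteq> a \<and> x \<noteq> b \<and> ins a b x = ins a b w \<and> (is_edge N {a,x} \<or> {a,x} \<in> T)
           \<and> (is_edge N {x,b} \<or> {x,b} \<in> T)"
proof -
  obtain a' b' where d: "{a,b} = {a',b'}" "a' < b'" "b' < N" "a' + 2 \<le> b'" "\<not> (a' = 0 \<and> b' = N - 1)"
    using tri_diag[OF tri ab] by (rule diag_obtain)
  from d(1) have "(a = a' \<and> b = b') \<or> (a = b' \<and> b = a')" by (metis doubleton_eq_iff)
  then have aa: "a = a'" "b = b'" using lt d(2) by auto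
  have bN: "b < N" and a2: "a + 2 \<le> b" and nw: "\<not> (a = 0 \<and> b = N - 1)" using d aa by auto
  have aN: "a < N" using lt bN by simp
  define s where "s = ins a b w"
  define C where "C = {x. x < N \<and> x \<noteq> a \<and> x \<noteq> b \<and> ins a b x = s \<and> (is_edge N {a,x} \<or> {a,x} \<in> T)}"
  define B where "B = (\<lambda>x. {v. v < N \<and> v \<noteq> a \<and> v \<noteq> b \<and> v \<noteq> x \<and> ins a b v = s \<and> ins a x v = ins a x b})"
  have nbC: "\<exists>y. y \<in> C"
  proof (cases s)
    case True
    then have "a < w" "w < b" using lt unfolding s_def ins_def by auto
    then have "a + 1 < N" "a + 1 \<noteq> b" "ins a b (a+1) = s" using True bN unfolding ins_def by auto
    moreover have "is_edge N {a, a+1}" unfolding is_edge_def using \<open>a + 1 < N\<close> by auto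
    ultimately have "a + 1 \<in> C" unfolding C_def by auto
    then show ?thesis by blast
  next
    case False
    show ?thesis
    proof (cases "0 < a")
      case True
      have "ins a b (a-1) = s" using False lt True unfolding ins_def by auto
      moreover have "is_edge N {a, a-1}" unfolding is_edge_def using True aN
        by (intro exI[of _ "a-1"] exI[of _ a]) (auto simp: insert_commute)
      ultimately have "a - 1 \<in> C" unfolding C_def using True aN lt by auto
      then show ?thesis by blast
    next
      case a0: False
      then have "a = 0" by simp
      have "b < w" using False w lt \<open>a = 0\<close> unfolding s_def ins_def by auto
      then have "b < N - 1" using nw \<open>a = 0\<close> w by auto
      then have "ins a b (N-1) = s" using False lt \<open>a = 0\<close> unfolding ins_def by auto
      moreover have "is_edge N {a, N-1}" unfolding is_edge_def using \<open>a = 0\<close> \<open>b < N - 1\<close>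
        by (intro exI[of _ 0] exI[of _ "N-1"]) auto
      ultimately have "N - 1 \<in> C" unfolding C_def using \<open>b < N - 1\<close> \<open>a = 0\<close> by auto
      then show ?thesis by blast
    qed
  qed
  then obtain y0 where "y0 \<in> C" by blast
  obtain x where xC: "x \<in> C" and xmin: "\<And>y. y \<in> C \<Longrightarrow> card (B x) \<le> card (B y)"
    using ex_has_least_nat[of "\<lambda>x. x \<in> C" y0 "\<lambda>x. card (B x)"] \<open>y0 \<in> C\<close> by blast
  have x: "x < N" "x \<noteq> a" "x \<noteq> b" "ins a b x = s" "is_edge N {a,x} \<or> {a,x} \<in> T"
    using xC unfolding C_def by auto
  have "is_edge N {x,b} \<or> {x,b} \<in> T"
  proof (rule ccontr)
    assume H: "\<not> (is_edge N {x,b} \<or> {x,b} \<in> T)"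
    then have "is_diagonal N {x,b}" using nonedge_diag[of x b N] x bN by auto
    then obtain dd where ddT: "dd \<in> T" and ddc: "crosses dd {x,b}" using tri_max[OF tri] H by blast
    obtain p0 q0 where pq0: "dd = {p0,q0}" "p0 < q0" "q0 < N" using tri_diag[OF tri ddT] by (rule diag_obtain)
    have "cr x b p0 q0" using ddc pq0 crosses_cr cr_sym by auto
    then have c0: "p0 \<noteq> x" "p0 \<noteq> b" "q0 \<noteq> x" "q0 \<noteq> b" "ins x b p0 \<noteq> ins x b q0" unfolding cr_def by auto
    obtain p q where pq: "dd = {p,q}" "p < N" "q < N" "p \<noteq> x" "p \<noteq> b" "q \<noteq> x" "q \<noteq> b"
       "ins x b p \<noteq> ins x b a" "ins x b q = ins x b a"
    proof (cases "ins x b p0 = ins x b a")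
      case True
      then show ?thesis using that[of q0 p0] pq0 c0 by (auto simp: insert_commute)
    next
      case False
      then show ?thesis using that[of p0 q0] pq0 c0 by auto
    qed
    have f1: "p \<noteq> a" "ins a b p = ins a b x" "ins a x p = ins a x b"
      using F1[of a N b x p] aN bN x pq lt by auto
    have qa: "q = a"
    proof (rule ccontr)
      assume qa: "q \<noteq> a"
      have "\<not> crosses {a,b} dd" using tri_nc[OF tri ab ddT] .
      then have "\<not> cr a b p q" using pq crosses_cr by auto
      then have "ins a b p = ins a b q" using f1 qa pq unfolding cr_def by auto
      then have "ins a b x = ins a b q" using f1 by simp
      then have "ins a x q \<noteq> ins a x b" using F2[of a N b x q] aN bN x pq qa lt by auto
      then have crx: "cr a x p q" using f1 qa pq x unfolding cr_def by auto
      show False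
      proof (cases "is_edge N {a,x}")
        case True then show False using edge_nocross[OF True pq(2,3)] crx by simp
      next
        case False
        then have "{a,x} \<in> T" using x by auto
        then have "\<not> crosses {a,x} dd" using tri_nc[OF tri _ ddT] by blast
        then show False using crx pq crosses_cr by auto
      qed
    qed
    have paT: "{a,p} \<in> T" using ddT pq qa by (simp add: insert_commute)
    have pC: "p \<in> C" unfolding C_def using pq f1 paT x by auto
    have pB: "p \<in> B x" unfolding B_def using pq f1 x by auto
    have sub: "B p \<subseteq> B x"
    proof
      fix v assume "v \<in> B p"
      then have v: "v < N" "v \<noteq> a" "v \<noteq> b" "v \<noteq> p" "ins a b v = s" "ins a p v = ins a p b"
        unfolding B_def by auto
      have "v \<noteq> x \<and> ins a x v = ins a x b"
        using F3[of a N b x p v] aN bN x pq f1 v lt by auto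
      then show "v \<in> B x" unfolding B_def using v by auto
    qed
    have "p \<notin> B p" unfolding B_def by auto
    then have "B p \<subset> B x" using sub pB by blast
    moreover have "finite (B x)" unfolding B_def by auto
    ultimately have "card (B p) < card (B x)" by (rule psubset_card_mono[rotated])
    then show False using xmin[OF pC] by simp
  qed
  then show ?thesis using x unfolding s_def by blast
qed

lemma tri_exists:
  assumes tri: "is_triangulation N T" and ab: "{a,b} \<in> T"
    and w: "w < N" "w \<noteq> a" "w \<noteq> b"
  shows "\<exists>x. x < N \<and> x \<noteq> a \<and> x \<noteq> b \<and> ins a b x = ins a b w \<and> (is_edge N {a,x} \<or> {a,x} \<in> T)
           \<and> (is_edge N {x,b} \<or> {x,b} \<in> T)"
proof -
  obtain a' b' where d: "{a,b} = {a',b'}" "a' < b'"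
    using tri_diag[OF tri ab] by (rule diag_obtain)
  then have "a \<noteq> b" by auto
  show ?thesis
  proof (cases "a < b")
    case True then show ?thesis using tri_exists_ord[OF tri ab True w] by blast
  next
    case False
    then have "b < a" using \<open>a \<noteq> b\<close> by simp
    moreover have "{b,a} \<in> T" using ab by (simp add: insert_commute)
    ultimately obtain x where "x < N \<and> x \<noteq> b \<and> x \<noteq> a \<and> ins b a x = ins b a w \<and> (is_edge N {b,x} \<or> {b,x} \<in> T)
           \<and> (is_edge N {x,a} \<or> {x,a} \<in> T)"
      using tri_exists_ord[OF tri _ _ w(1,3,2)] by blast
    moreover have "{x,a} = {a,x}" "{b,x} = {x,b}" by auto
    ultimately show ?thesis using ins_sym[of a b] by auto
  qed
qed



lemma diag_obtain3:
  assumes "is_diagonal N d"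
  obtains a b where "d = {a,b}" "a < b" "b < N"
  using assms unfolding is_diagonal_def by blast

lemma step:
  assumes tri: "is_triangulation N T" and ab: "{a,b} \<in> T" and abn: "a \<noteq> b" "a < N" "b < N"
    and x: "x < N" "x \<noteq> a" "x \<noteq> b" "is_edge N {a,x} \<or> {a,x} \<in> T" "is_edge N {x,b} \<or> {x,b} \<in> T"
    and j: "j = {c,d}" "c < N" "d < N" "c \<noteq> d" "c \<noteq> a" "c \<noteq> b" "ins a b c = ins a b x" "\<not> cr a b c d"
    and A: "c = a \<or> c = x \<or> ins a x c \<noteq> ins a x b" "d = a \<or> d = x \<or> ins a x d \<noteq> ins a x b"
    and al: "p < N" "q < N" "cr a b p q" "cr c d p q"
    and al': "p' < N" "q' < N" "cr a b p' q'" "cr c d p' q'"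
  shows "{a,x} \<in> T \<and> crosses {a,x} {p,q} \<and> crosses {a,x} {p',q'} \<and> quiver_adj N T {a,b} {a,x}
     \<and> ({a,x} = j \<or> card (far N {a,x} j) < card (far N {a,b} j))"
proof -
  have c1: "cr a x p q" using G2[of a N b x c d p q] abn x j A al by auto
  have c2: "cr a x p' q'" using G2[of a N b x c d p' q'] abn x j A al' by auto
  have axT: "{a,x} \<in> T" using x(4) edge_nocross[of N a x p q] c1 al by auto
  have cr1: "crosses {a,x} {p,q}" "crosses {a,x} {p',q'}" using c1 c2 crosses_cr by auto
  have tri_abx: "is_triangle_of N T a b x"
    unfolding is_triangle_of_def using abn x ab axT by (auto simp: insert_commute)
  have neq: "{a,b} \<noteq> {a,x}" using x abn by (auto simp: doubleton_eq_iff)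
  have qa: "quiver_adj N T {a,b} {a,x}"
    unfolding quiver_adj_def using ab axT neq tri_abx by blast
  have "{a,x} = j \<or> card (far N {a,x} j) < card (far N {a,b} j)"
  proof (cases "{a,x} = j")
    case True then show ?thesis by simp
  next
    case False
    have "\<exists>w\<in>{c,d}. w \<notin> {a,x}"
    proof (rule ccontr)
      assume "\<not> (\<exists>w\<in>{c,d}. w \<notin> {a,x})"
      then have "c \<in> {a,x}" "d \<in> {a,x}" by auto
      then have "{c,d} = {a,x}" using j(4) by auto
      then show False using False j(1) by simp
    qed
    then obtain w where w: "w \<in> {c,d}" "w \<notin> {a,x}" by blast
    have wb: "ins a x w \<noteq> ins a x b" using w A by auto
    have ncr: "\<not> cr a x c d" using A unfolding cr_def by auto
    have e1: "far N {a,x} j = {v. v < N \<and> v \<notin> {a,x} \<and> ins a x v = ins a x w}"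
      using far_eq[OF j(1) _ w(2) ncr] w(1) j(1) by blast
    have e2: "far N {a,b} j = {v. v < N \<and> v \<notin> {a,b} \<and> ins a b v = ins a b c}"
      using far_eq[OF j(1) _ _ j(8), of c] j by auto
    have sub: "far N {a,x} j \<subseteq> far N {a,b} j"
    proof
      fix v assume "v \<in> far N {a,x} j"
      then have v: "v < N" "v \<noteq> a" "v \<noteq> x" "ins a x v \<noteq> ins a x b" using e1 wb by auto
      then have "v \<noteq> b \<and> ins a b v = ins a b x" using F4[of a N b x v] abn x by auto
      then show "v \<in> far N {a,b} j" using e2 v j(7) by auto
    qed
    have "x \<in> far N {a,b} j" "x \<notin> far N {a,x} j" using e1 e2 x j(7) by auto
    then have "far N {a,x} j \<subset> far N {a,b} j" using sub by blast
    moreover have "finite (far N {a,b} j)" unfolding far_def by auto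
    ultimately show ?thesis using psubset_card_mono by auto
  qed
  then show ?thesis using axT cr1 qa by blast
qed

theorem mainTheorem11:
  fixes n :: nat and T :: "nat set set" and \<alpha> \<alpha>' :: "nat set"
  assumes "is_triangulation (n + 3) T"
    and "positive_root (n + 3) T \<alpha>"
    and "positive_root (n + 3) T \<alpha>'"
  shows "connected_in (quiver_adj (n + 3) T) (Supp T \<alpha> \<inter> Supp T \<alpha>')"
proof -
  define N where "N = n + 3"
  have tri: "is_triangulation N T" using assms(1) N_def by simp
  have "is_diagonal N \<alpha>" "is_diagonal N \<alpha>'" using assms(2,3) unfolding positive_root_def N_def by auto
  obtain p q where pq: "\<alpha> = {p,q}" "p < q" "q < N"
    using \<open>is_diagonal N \<alpha>\<close> by (rule diag_obtain3)
  obtain p' q' where pq': "\<alpha>' = {p',q'}" "p' < q'" "q' < N"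
    using \<open>is_diagonal N \<alpha>'\<close> by (rule diag_obtain3)
  define S where "S = Supp T \<alpha> \<inter> Supp T \<alpha>'"
  have Sd: "i \<in> S \<longleftrightarrow> i \<in> T \<and> crosses i {p,q} \<and> crosses i {p',q'}" for i
    unfolding S_def Supp_def using pq pq' by auto
  define R where "R = (\<lambda>u v. u \<in> S \<and> v \<in> S \<and> quiver_adj N T u v)"
  have main: "R\<^sup>*\<^sup>* i j" if iS: "i \<in> S" and jS: "j \<in> S" for i j
    using iS
  proof (induction i rule: measure_induct_rule[where f = "\<lambda>i. card (far N i j)"])
    case (less i)
    show ?case
    proof (cases "i = j")
      case True then show ?thesis by simp
    next
      case False
      have iT: "i \<in> T" and jT: "j \<in> T" using less.prems jS Sd by auto
      obtain a b where ab: "i = {a,b}" "a < b" "b < N" using tri_diag[OF tri iT] by (rule diag_obtain3)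
      obtain c0 d0 where cd0: "j = {c0,d0}" "c0 < d0" "d0 < N" using tri_diag[OF tri jT] by (rule diag_obtain3)
      obtain c d where cd: "j = {c,d}" "c < N" "d < N" "c \<noteq> d" "c \<noteq> a" "c \<noteq> b"
      proof (cases "c0 \<in> {a,b}")
        case True
        have "d0 \<notin> {a,b}"
        proof
          assume "d0 \<in> {a,b}"
          then have "j = i" using True cd0 ab by auto
          then show False using False by simp
        qed
        then show ?thesis using that[of d0 c0] cd0 by (auto simp: insert_commute)
      next
        case False
        then show ?thesis using that[of c0 d0] cd0 by auto
      qed
      have ncr: "\<not> cr a b c d" using tri_nc[OF tri iT jT] ab cd crosses_cr by auto
      have al: "cr a b p q" "cr c d p q" "cr a b p' q'" "cr c d p' q'"
        using less.prems jS Sd ab cd crosses_cr by auto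
      have aN: "a < N" using ab by simp
      obtain x where x: "x < N" "x \<noteq> a" "x \<noteq> b" "ins a b x = ins a b c"
          "is_edge N {a,x} \<or> {a,x} \<in> T" "is_edge N {x,b} \<or> {x,b} \<in> T"
        using tri_exists[OF tri iT[unfolded ab] cd(2,5,6)] by blast
      have nax: "\<not> cr a x c d"
      proof (cases "is_edge N {a,x}")
        case True then show ?thesis using edge_nocross cd by blast
      next
        case False then have "{a,x} \<in> T" using x by auto
        then show ?thesis using tri_nc[OF tri _ jT] cd crosses_cr by blast
      qed
      have nxb: "\<not> cr x b c d"
      proof (cases "is_edge N {x,b}")
        case True then show ?thesis using edge_nocross cd by blast
      next
        case False then have "{x,b} \<in> T" using x by auto
        then show ?thesis using tri_nc[OF tri _ jT] cd crosses_cr by blast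
      qed
      have g1: "((c = a \<or> c = x \<or> ins a x c \<noteq> ins a x b) \<and> (d = a \<or> d = x \<or> ins a x d \<noteq> ins a x b)) \<or>
         ((c = x \<or> c = b \<or> ins x b c \<noteq> ins x b a) \<and> (d = x \<or> d = b \<or> ins x b d \<noteq> ins x b a))"
        using G1[of a N b x c d] ab x cd ncr nax nxb by auto
      obtain e where e: "e \<in> S" "quiver_adj N T i e" "e = j \<or> card (far N e j) < card (far N i j)"
      proof (cases "(c = a \<or> c = x \<or> ins a x c \<noteq> ins a x b) \<and> (d = a \<or> d = x \<or> ins a x d \<noteq> ins a x b)")
        case True
        have "{a,x} \<in> T \<and> crosses {a,x} {p,q} \<and> crosses {a,x} {p',q'} \<and> quiver_adj N T {a,b} {a,x}
            \<and> ({a,x} = j \<or> card (far N {a,x} j) < card (far N {a,b} j))"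
          using step[OF tri iT[unfolded ab], where x=x and c=c and d=d and j=j and p=p and q=q and p'=p' and q'=q'] ab x cd ncr True al pq pq' by auto
        then show ?thesis using that[of "{a,x}"] Sd ab by auto
      next
        case False
        then have B: "(c = b \<or> c = x \<or> ins b x c \<noteq> ins b x a)" "(d = b \<or> d = x \<or> ins b x d \<noteq> ins b x a)"
          using g1 ins_sym[of x b] by auto
        have bT: "{b,a} \<in> T" using iT ab by (simp add: insert_commute)
        have x': "is_edge N {b,x} \<or> {b,x} \<in> T" "is_edge N {x,a} \<or> {x,a} \<in> T" using x by (auto simp: insert_commute)
        have "ins b a c = ins b a x" "\<not> cr b a c d" using x(4) ncr ins_sym[of a b] cr_swap1 by auto
        moreover have "cr b a p q" "cr b a p' q'" using al cr_swap1 by auto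
        ultimately have "{b,x} \<in> T \<and> crosses {b,x} {p,q} \<and> crosses {b,x} {p',q'} \<and> quiver_adj N T {b,a} {b,x}
            \<and> ({b,x} = j \<or> card (far N {b,x} j) < card (far N {b,a} j))"
          using step[OF tri bT, where x=x and c=c and d=d and j=j and p=p and q=q and p'=p' and q'=q'] ab x x' cd B al pq pq' by auto
        moreover have "{b,a} = i" using ab by auto
        ultimately show ?thesis using that[of "{b,x}"] Sd by auto
      qed
      have Rie: "R i e" unfolding R_def using less.prems e by auto
      show ?thesis
      proof (cases "e = j")
        case True then show ?thesis using Rie by auto
      next
        case False
        then have "R\<^sup>*\<^sup>* e j" using less.IH e by auto
        with Rie show ?thesis by (rule converse_rtranclp_into_rtranclp[of R i e j])
      qed
    qed
  qed
  show ?thesis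
    unfolding connected_in_def using main unfolding R_def S_def N_def by blast
qed


end
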